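(* Let $f(t)\in\mathbb{F}_q[t;\theta]$ be a right divisor of some monic $F(t)\in\mathbb{F}_q[t;\theta]$ of degree $n$, let $\mathscr{C}=\{w\in\mathbb{F}_q[t;\theta]:\deg w<n,\ w=a(t)f(t)\text{ for some }a\in\mathbb{F}_q[t;\theta]\}\subseteq\mathbb{F}_q^n$ be the linear code generated by $f$, and let $\mathscr{C}^{[]_s}=\{v\in\mathbb{F}_q[x]:\deg v<[n]_s,\ v=b(x)f^{[]_s}(x)\text{ for some }b\in\mathbb{F}_q[x]\}\subseteq\mathbb{F}_q^{[n]_s}$ be the linear code generated by $f^{[]_s}(x)$. Then $d(\mathscr{C}^{[]_s})\le d(\mathscr{C})$, and equality holds if and only if some codeword of minimal weight of $\mathscr{C}^{[]_s}$ belongs to $\mathbb{F}_q[x^{[]_s}]$.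
   Context: $q=p^r$ with $p$ prime, $\theta(a)=a^{p^s}$ for $a\in\mathbb{F}_q$ with $1\le s\le r-1$, and $\mathbb{F}_q[t;\theta]$ is the skew polynomial ring with $ta=\theta(a)t$. Polynomials of degree $<n$ are identified with their coefficient vectors in $\mathbb{F}_q^n$; the weight of a polynomial is its number of nonzero coefficients, and $d(\cdot)$ is the minimum Hamming distance (minimum nonzero weight). For $i\ge0$, $[i]_s=\frac{(p^s)^i-1}{p^s-1}$. For $f(t)=\sum_ia_it^i$, $f^{[]_s}(x)=\sum_ia_ix^{[i]_s}\in\mathbb{F}_q[x]$ (commutative polynomial ring), and $\mathbb{F}_q[x^{[]_s}]=\{\sum_i\alpha_ix^{[i]_s}\}\subseteq\mathbb{F}_q[x]$. *)

theory Defs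
  imports "HOL-Computational_Algebra.Polynomial"
begin

text \<open>Skew polynomials in F_q[t;theta] are represented by their coefficient
  sequences as values of type 'a poly; only the multiplication differs:
  (a t^i)(b t^j) = a theta^i(b) t^(i+j).\<close>

definition skew_mult :: "('a::comm_ring_1 \<Rightarrow> 'a) \<Rightarrow> 'a poly \<Rightarrow> 'a poly \<Rightarrow> 'a poly" where
  "skew_mult \<theta> f g =
     (\<Sum>i\<le>degree f. \<Sum>j\<le>degree g. monom (coeff f i * (\<theta> ^^ i) (coeff g j)) (i + j))"

text \<open>"deg w < n" (with deg 0 = -infinity): all coefficients from n on vanish.\<close>
definition deg_less :: "'a::zero poly \<Rightarrow> nat \<Rightarrow> bool" where
  "deg_less w n \<longleftrightarrow> (\<forall>i\<ge>n. coeff w i = 0)"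

text \<open>[i]_s = ((p^s)^i - 1)/(p^s - 1), with Q = p^s.\<close>
definition qbr :: "nat \<Rightarrow> nat \<Rightarrow> nat" where
  "qbr Q i = (Q ^ i - 1) div (Q - 1)"

definition lin_poly :: "nat \<Rightarrow> 'a::comm_ring_1 poly \<Rightarrow> 'a poly" where
  "lin_poly Q f = (\<Sum>i\<le>degree f. monom (coeff f i) (qbr Q i))"

definition lin_polys :: "nat \<Rightarrow> 'a::zero poly set" where
  "lin_polys Q = {v. \<forall>k. coeff v k \<noteq> 0 \<longrightarrow> (\<exists>i. k = qbr Q i)}"

definition skew_code :: "('a::comm_ring_1 \<Rightarrow> 'a) \<Rightarrow> 'a poly \<Rightarrow> nat \<Rightarrow> 'a poly set" where
  "skew_code \<theta> f n = {w. deg_less w n \<and> (\<exists>a. w = skew_mult \<theta> a f)}"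

definition lin_code :: "nat \<Rightarrow> 'a::comm_ring_1 poly \<Rightarrow> nat \<Rightarrow> 'a poly set" where
  "lin_code Q f n = {v. deg_less v (qbr Q n) \<and> (\<exists>b. v = b * lin_poly Q f)}"

definition weight :: "'a::zero poly \<Rightarrow> nat" where
  "weight w = card {i. coeff w i \<noteq> 0}"

definition min_dist :: "'a::zero poly set \<Rightarrow> nat" where
  "min_dist C = Min (weight ` (C - {0}))"

end

theory Submission imports Defs "HOL-Computational_Algebra.Primes" begin

lemma geo_nat: "(Q::nat) \<ge> 1 \<Longrightarrow> (Q - 1) * (\<Sum>k<i. Q^k) = Q^i - 1"
proof (induction i)
  case (Suc i)
  have "Q^i \<ge> 1" using Suc.prems by simp
  have "(Q - 1) * (\<Sum>k<Suc i. Q^k) = (Q^i - 1) + (Q - 1) * Q^i"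
    using Suc by (simp add: distrib_left)
  also have "\<dots> = Q^Suc i - 1"
  proof -
    have "(Q - 1) * Q^i = Q * Q^i - Q^i" by (simp add: diff_mult_distrib)
    moreover have "Q * Q^i \<ge> Q^i" using Suc.prems by simp
    ultimately show ?thesis using \<open>Q^i \<ge> 1\<close> by simp
  qed
  finally show ?case .
qed simp

lemma qbr_sum: "(Q::nat) \<ge> 2 \<Longrightarrow> qbr Q i = (\<Sum>k<i. Q^k)"
proof -
  assume Q: "Q \<ge> 2"
  hence "Q - 1 > 0" by simp
  have "Q^i - 1 = (Q - 1) * (\<Sum>k<i. Q^k)" using geo_nat[of Q i] Q by simp
  thus ?thesis unfolding qbr_def using \<open>Q - 1 > 0\<close> by simp
qed

lemma qbr_Suc: "(Q::nat) \<ge> 2 \<Longrightarrow> qbr Q (Suc i) = qbr Q i + Q^i"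
  by (simp add: qbr_sum)

lemma qbr_add: "(Q::nat) \<ge> 2 \<Longrightarrow> qbr Q (i + j) = qbr Q i + Q^i * qbr Q j"
proof (induction j)
  case 0 thus ?case by (simp add: qbr_def)
next
  case (Suc j)
  have "qbr Q (i + Suc j) = qbr Q (i + j) + Q^(i+j)" using Suc.prems by (simp add: qbr_Suc)
  also have "\<dots> = qbr Q i + Q^i * (qbr Q j + Q^j)" using Suc by (simp add: power_add distrib_left)
  finally show ?case using Suc.prems by (simp add: qbr_Suc)
qed

lemma qbr_smono: "(Q::nat) \<ge> 2 \<Longrightarrow> strict_mono (qbr Q)"
proof -
  assume Q: "Q \<ge> 2"
  have "\<And>n. qbr Q n < qbr Q (Suc n)" using Q by (simp add: qbr_Suc)
  thus ?thesis unfolding strict_mono_def using lift_Suc_mono_less by blast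
qed

lemma qbr_less_iff: "(Q::nat) \<ge> 2 \<Longrightarrow> qbr Q i < qbr Q j \<longleftrightarrow> i < j"
  using qbr_smono strict_mono_less by blast
lemma qbr_le_iff: "(Q::nat) \<ge> 2 \<Longrightarrow> qbr Q i \<le> qbr Q j \<longleftrightarrow> i \<le> j"
  using qbr_smono strict_mono_less_eq by blast
lemma qbr_inj: "(Q::nat) \<ge> 2 \<Longrightarrow> qbr Q i = qbr Q j \<longleftrightarrow> i = j"
  using qbr_le_iff[of Q i j] qbr_le_iff[of Q j i] by auto
lemma qbr_ge: "(Q::nat) \<ge> 2 \<Longrightarrow> i \<le> qbr Q i"
  using qbr_smono strict_mono_imp_increasing by blast


lemma coeff_lin: "coeff (lin_poly Q f) k = (\<Sum>i\<le>degree f. if qbr Q i = k then coeff f i else 0)"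
  unfolding lin_poly_def by (simp add: coeff_sum coeff_monom)

lemma coeff_lin_qbr: "(Q::nat) \<ge> 2 \<Longrightarrow> coeff (lin_poly Q f) (qbr Q j) = coeff f j"
proof -
  assume Q: "Q \<ge> 2"
  have "coeff (lin_poly Q f) (qbr Q j) = (\<Sum>i\<le>degree f. if i = j then coeff f i else 0)"
    unfolding coeff_lin using qbr_inj[OF Q] by simp
  also have "\<dots> = (if j \<le> degree f then coeff f j else 0)"
    by (simp add: sum.delta)
  also have "\<dots> = coeff f j" by (simp add: coeff_eq_0)
  finally show ?thesis .
qed

lemma coeff_lin_notin: "k \<notin> range (qbr Q) \<Longrightarrow> coeff (lin_poly Q f) k = 0"
  unfolding coeff_lin by (intro sum.neutral) auto

lemma lin_unique:
  assumes Q: "(Q::nat) \<ge> 2" and "\<And>j. coeff P (qbr Q j) = coeff f j"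
    and "\<And>k. k \<notin> range (qbr Q) \<Longrightarrow> coeff P k = 0"
  shows "lin_poly Q f = P"
proof (rule poly_eqI)
  fix k show "coeff (lin_poly Q f) k = coeff P k"
  proof (cases "k \<in> range (qbr Q)")
    case True then obtain j where "k = qbr Q j" by auto
    thus ?thesis using assms by (simp add: coeff_lin_qbr[OF Q])
  next
    case False thus ?thesis using assms coeff_lin_notin by metis
  qed
qed

lemma lin_add: "(Q::nat) \<ge> 2 \<Longrightarrow> lin_poly Q (f + g) = lin_poly Q f + lin_poly Q g"
  by (rule lin_unique) (auto simp: coeff_lin_qbr coeff_lin_notin)

lemma lin_diff: "(Q::nat) \<ge> 2 \<Longrightarrow> lin_poly Q (f - g) = lin_poly Q f - lin_poly Q g"
  by (rule lin_unique) (auto simp: coeff_lin_qbr coeff_lin_notin)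

lemma lin_zero: "(Q::nat) \<ge> 2 \<Longrightarrow> lin_poly Q 0 = 0"
  by (rule lin_unique) (auto simp: coeff_lin_qbr coeff_lin_notin)

lemma lin_monom: "(Q::nat) \<ge> 2 \<Longrightarrow> lin_poly Q (monom c m) = monom c (qbr Q m)"
  by (rule lin_unique) (auto simp: coeff_monom qbr_inj)

lemma lin_sum: "(Q::nat) \<ge> 2 \<Longrightarrow> lin_poly Q (sum g A) = (\<Sum>x\<in>A. lin_poly Q (g x))"
  by (induction A rule: infinite_finite_induct) (auto simp: lin_zero lin_add)

lemma lin_inj: "(Q::nat) \<ge> 2 \<Longrightarrow> lin_poly Q f = lin_poly Q g \<Longrightarrow> f = g"
  by (rule poly_eqI) (metis coeff_lin_qbr)

lemma lin_eq0: "(Q::nat) \<ge> 2 \<Longrightarrow> lin_poly Q f = 0 \<longleftrightarrow> f = 0"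
  using lin_inj lin_zero by metis

lemma weight_lin: "(Q::nat) \<ge> 2 \<Longrightarrow> weight (lin_poly Q f) = weight f"
proof -
  assume Q: "Q \<ge> 2"
  have "{k. coeff (lin_poly Q f) k \<noteq> 0} = qbr Q ` {i. coeff f i \<noteq> 0}"
  proof
    show "{k. coeff (lin_poly Q f) k \<noteq> 0} \<subseteq> qbr Q ` {i. coeff f i \<noteq> 0}"
    proof
      fix k assume "k \<in> {k. coeff (lin_poly Q f) k \<noteq> 0}"
      hence nz: "coeff (lin_poly Q f) k \<noteq> 0" by simp
      then obtain j where "k = qbr Q j" using coeff_lin_notin by blast
      thus "k \<in> qbr Q ` {i. coeff f i \<noteq> 0}" using nz by (auto simp: coeff_lin_qbr[OF Q])
    qed
  qed (auto simp: coeff_lin_qbr[OF Q])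
  moreover have "inj_on (qbr Q) {i. coeff f i \<noteq> 0}"
    using qbr_inj[OF Q] by (auto intro: inj_onI)
  ultimately show ?thesis unfolding weight_def by (simp add: card_image)
qed

lemma deg_less_lin: "(Q::nat) \<ge> 2 \<Longrightarrow> deg_less (lin_poly Q f) (qbr Q n) \<longleftrightarrow> deg_less f n"
proof -
  assume Q: "Q \<ge> 2"
  show ?thesis unfolding deg_less_def
  proof
    assume H: "\<forall>i\<ge>qbr Q n. coeff (lin_poly Q f) i = 0"
    show "\<forall>i\<ge>n. coeff f i = 0"
      using H by (metis coeff_lin_qbr[OF Q] qbr_le_iff[OF Q])
  next
    assume H: "\<forall>i\<ge>n. coeff f i = 0"
    show "\<forall>i\<ge>qbr Q n. coeff (lin_poly Q f) i = 0"
    proof (intro allI impI)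
      fix k assume k: "qbr Q n \<le> k"
      show "coeff (lin_poly Q f) k = 0"
      proof (cases "k \<in> range (qbr Q)")
        case True then obtain j where j: "k = qbr Q j" by auto
        hence "n \<le> j" using k qbr_le_iff[OF Q] by simp
        thus ?thesis using j H by (simp add: coeff_lin_qbr[OF Q])
      qed (simp add: coeff_lin_notin)
    qed
  qed
qed

lemma degree_lin: "(Q::nat) \<ge> 2 \<Longrightarrow> degree (lin_poly Q f) = qbr Q (degree f)"
proof -
  assume Q: "Q \<ge> 2"
  show ?thesis
  proof (cases "f = 0")
    case True thus ?thesis using Q by (simp add: lin_zero qbr_def)
  next
    case False
    have "coeff (lin_poly Q f) (qbr Q (degree f)) \<noteq> 0"
      using False by (simp add: coeff_lin_qbr[OF Q])
    hence "qbr Q (degree f) \<le> degree (lin_poly Q f)" by (rule le_degree)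
    moreover have "degree (lin_poly Q f) \<le> qbr Q (degree f)"
    proof (rule degree_le, intro allI impI)
      fix k assume k: "qbr Q (degree f) < k"
      show "coeff (lin_poly Q f) k = 0"
      proof (cases "k \<in> range (qbr Q)")
        case True then obtain j where j: "k = qbr Q j" by auto
        hence "degree f < j" using k qbr_less_iff[OF Q] by simp
        thus ?thesis using j by (simp add: coeff_eq_0 coeff_lin_qbr[OF Q])
      qed (simp add: coeff_lin_notin)
    qed
    ultimately show ?thesis by simp
  qed
qed

lemma lin_in: "lin_poly Q f \<in> lin_polys Q"
  unfolding lin_polys_def using coeff_lin_notin by blast

lemma lin_surj:
  assumes Q: "(Q::nat) \<ge> 2" and v: "v \<in> lin_polys Q"
  shows "\<exists>w. v = lin_poly Q w"
proof -
  define w where "w = (\<Sum>i\<le>degree v. monom (coeff v (qbr Q i)) i)"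
  have cw: "coeff w j = (if j \<le> degree v then coeff v (qbr Q j) else 0)" for j
    unfolding w_def by (simp add: coeff_sum coeff_monom sum.delta')
  have "lin_poly Q w = v"
  proof (rule lin_unique[OF Q])
    fix j show "coeff v (qbr Q j) = coeff w j"
    proof (cases "j \<le> degree v")
      case False
      hence "degree v < qbr Q j" using qbr_ge[OF Q, of j] by simp
      thus ?thesis using False cw by (simp add: coeff_eq_0)
    qed (simp add: cw)
  next
    fix k assume "k \<notin> range (qbr Q)"
    thus "coeff v k = 0" using v unfolding lin_polys_def by blast
  qed
  thus ?thesis by metis
qed


lemma funpow_pow: "((\<lambda>x::'a::comm_ring_1. x ^ Q) ^^ i) b = b ^ (Q ^ i)"
  by (induction i) (simp_all add: power_mult[symmetric] mult.commute)

lemma skew_mult_ext: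
  fixes a f :: "'a::comm_ring_1 poly"
  assumes Q: "Q > 0" and N: "degree a \<le> N" and M: "degree f \<le> M"
  shows "skew_mult (\<lambda>x. x ^ Q) a f =
    (\<Sum>i\<le>N. \<Sum>j\<le>M. monom (coeff a i * coeff f j ^ (Q ^ i)) (i + j))"
proof -
  have inner: "(\<Sum>j\<le>M. monom (coeff a i * coeff f j ^ (Q ^ i)) (i + j)) =
      (\<Sum>j\<le>degree f. monom (coeff a i * coeff f j ^ (Q ^ i)) (i + j))" for i
    by (rule sum.mono_neutral_right) (use M Q in \<open>auto simp: coeff_eq_0 power_0_left\<close>)
  have "(\<Sum>i\<le>N. \<Sum>j\<le>M. monom (coeff a i * coeff f j ^ (Q ^ i)) (i + j)) =
      (\<Sum>i\<le>degree a. \<Sum>j\<le>degree f. monom (coeff a i * coeff f j ^ (Q ^ i)) (i + j))"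
    unfolding inner
    by (rule sum.mono_neutral_right) (use N in \<open>auto simp: coeff_eq_0\<close>)
  thus ?thesis unfolding skew_mult_def funpow_pow by simp
qed

lemma skew_add:
  fixes a b f :: "'a::comm_ring_1 poly"
  assumes Q: "Q > 0"
  shows "skew_mult (\<lambda>x. x ^ Q) (a + b) f = skew_mult (\<lambda>x. x ^ Q) a f + skew_mult (\<lambda>x. x ^ Q) b f"
proof -
  let ?N = "max (degree a) (degree b)"
  have "degree (a + b) \<le> ?N" by (rule degree_add_le) auto
  thus ?thesis
    using skew_mult_ext[OF Q, of "a+b" ?N f "degree f"] skew_mult_ext[OF Q, of a ?N f "degree f"]
      skew_mult_ext[OF Q, of b ?N f "degree f"]
    by (simp add: distrib_right add_monom[symmetric] sum.distrib)
qed

lemma skew_zero: "skew_mult \<theta> 0 f = 0"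
  unfolding skew_mult_def by simp

lemma coeff_skew_monom:
  fixes f :: "'a::comm_ring_1 poly"
  assumes Q: "Q > 0"
  shows "coeff (skew_mult (\<lambda>x. x ^ Q) (monom c k) f) m =
    (if k \<le> m then c * coeff f (m - k) ^ (Q ^ k) else 0)"
proof -
  have "skew_mult (\<lambda>x. x ^ Q) (monom c k) f =
    (\<Sum>i\<le>k. \<Sum>j\<le>degree f. monom (coeff (monom c k) i * coeff f j ^ (Q ^ i)) (i + j))"
    by (rule skew_mult_ext[OF Q]) (auto simp: degree_monom_le)
  also have "\<dots> = (\<Sum>i\<in>{k}. \<Sum>j\<le>degree f. monom (coeff (monom c k) i * coeff f j ^ (Q ^ i)) (i + j))"
    by (rule sum.mono_neutral_right) (auto simp: coeff_monom)
  also have "\<dots> = (\<Sum>j\<le>degree f. monom (c * coeff f j ^ (Q ^ k)) (k + j))"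
    by simp
  finally have e: "skew_mult (\<lambda>x. x ^ Q) (monom c k) f = \<dots>" .
  have "coeff (\<Sum>j\<le>degree f. monom (c * coeff f j ^ (Q ^ k)) (k + j)) m =
      (\<Sum>j\<le>degree f. if j = m - k \<and> k \<le> m then c * coeff f j ^ (Q ^ k) else 0)"
    by (simp add: coeff_sum coeff_monom) (intro sum.cong refl, auto)
  also have "\<dots> = (if k \<le> m then c * coeff f (m - k) ^ (Q ^ k) else 0)"
    using Q by (auto simp: sum.delta coeff_eq_0 power_0_left)
  finally show ?thesis using e by simp
qed


lemma lin_skew_dvd:
  fixes a f :: "'a::comm_ring_1 poly"
  assumes Q: "Q \<ge> 2" and ch: "prime CHAR('a)" and Qp: "Q = CHAR('a) ^ s"
  shows "lin_poly Q f dvd lin_poly Q (skew_mult (\<lambda>x. x ^ Q) a f)"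
proof -
  have Q0: "Q > 0" using Q by simp
  have e: "lin_poly Q (skew_mult (\<lambda>x. x ^ Q) a f) =
     (\<Sum>i\<le>degree a. monom (coeff a i) (qbr Q i) * (lin_poly Q f) ^ (Q ^ i))"
  proof -
    have "lin_poly Q (skew_mult (\<lambda>x. x ^ Q) a f) =
       (\<Sum>i\<le>degree a. \<Sum>j\<le>degree f. monom (coeff a i * coeff f j ^ (Q ^ i)) (qbr Q (i + j)))"
      using skew_mult_ext[OF Q0 order_refl order_refl, of a f]
      by (simp add: lin_sum[OF Q] lin_monom[OF Q])
    also have "\<dots> = (\<Sum>i\<le>degree a. monom (coeff a i) (qbr Q i) * (lin_poly Q f) ^ (Q ^ i))"
    proof (rule sum.cong[OF refl])
      fix i
      have "(lin_poly Q f) ^ (Q ^ i) = (\<Sum>j\<le>degree f. monom (coeff f j) (qbr Q j)) ^ (Q ^ i)"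
        by (simp add: lin_poly_def)
      also have "\<dots> = (\<Sum>j\<le>degree f. monom (coeff f j) (qbr Q j) ^ (Q ^ i))"
        by (rule freshmans_dream_sum') (simp_all add: ch Qp power_mult[symmetric])
      also have "\<dots> = (\<Sum>j\<le>degree f. monom (coeff f j ^ (Q ^ i)) (qbr Q j * Q ^ i))"
        by (simp add: monom_power)
      finally show "(\<Sum>j\<le>degree f. monom (coeff a i * coeff f j ^ (Q ^ i)) (qbr Q (i + j))) =
          monom (coeff a i) (qbr Q i) * (lin_poly Q f) ^ (Q ^ i)"
        by (simp add: sum_distrib_left mult_monom qbr_add[OF Q] mult.commute)
    qed
    finally show ?thesis .
  qed
  show ?thesis unfolding e
    by (intro dvd_sum dvd_mult) (simp add: Q0)
qed

lemma skew_div: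
  fixes f w :: "'a::field poly"
  assumes Q: "Q \<ge> 2" and ch: "prime CHAR('a)" and Qp: "Q = CHAR('a) ^ s"
  shows "deg_less w N \<Longrightarrow> lin_poly Q f dvd lin_poly Q w \<Longrightarrow> \<exists>a. w = skew_mult (\<lambda>x. x ^ Q) a f"
proof (induction N arbitrary: w)
  case 0
  hence "w = 0" by (intro poly_eqI) (simp add: deg_less_def)
  thus ?case by (metis skew_zero)
next
  case (Suc N)
  have Q0: "Q > 0" using Q by simp
  show ?case
  proof (cases "deg_less w N")
    case True thus ?thesis using Suc by blast
  next
    case False
    have wN: "coeff w N \<noteq> 0"
      using False Suc.prems(1) unfolding deg_less_def by (metis Suc_leI le_neq_implies_less)
    have dw: "degree w = N"
    proof (rule antisym)
      show "degree w \<le> N" using Suc.prems(1) unfolding deg_less_def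
        by (intro degree_le) auto
      show "N \<le> degree w" using wN by (rule le_degree)
    qed
    have w0: "w \<noteq> 0" using wN by auto
    have f0: "f \<noteq> 0"
    proof
      assume "f = 0"
      hence "lin_poly Q w = 0" using Suc.prems(2) by (simp add: lin_zero[OF Q])
      thus False using w0 lin_eq0[OF Q] by blast
    qed
    have "degree (lin_poly Q f) \<le> degree (lin_poly Q w)"
      using Suc.prems(2) w0 lin_eq0[OF Q] by (intro dvd_imp_degree_le) auto
    hence df: "degree f \<le> N" using dw by (simp add: degree_lin[OF Q] qbr_le_iff[OF Q])
    define k where "k = N - degree f"
    define c where "c = coeff w N / (lead_coeff f ^ (Q ^ k))"
    define g where "g = skew_mult (\<lambda>x. x ^ Q) (monom c k) f"
    have lc: "lead_coeff f ^ (Q ^ k) \<noteq> 0" using f0 by simp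
    have "deg_less (w - g) N"
      unfolding deg_less_def
    proof (intro allI impI)
      fix m assume m: "N \<le> m"
      show "coeff (w - g) m = 0"
      proof (cases "m = N")
        case True
        have "N - k = degree f" using df k_def by simp
        thus ?thesis using True lc unfolding g_def c_def
          by (simp add: coeff_skew_monom[OF Q0] k_def)
      next
        case False
        hence "m > N" using m by simp
        hence "coeff w m = 0" "m - k > degree f" using dw df k_def by (auto simp: coeff_eq_0)
        thus ?thesis unfolding g_def using Q0
          by (simp add: coeff_skew_monom[OF Q0] coeff_eq_0 power_0_left)
      qed
    qed
    moreover have "lin_poly Q f dvd lin_poly Q (w - g)"
      unfolding lin_diff[OF Q] g_def
      by (intro dvd_diff Suc.prems(2) lin_skew_dvd[OF Q ch Qp])
    ultimately obtain a where "w - g = skew_mult (\<lambda>x. x ^ Q) a f" using Suc.IH by blast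
    hence "w = skew_mult (\<lambda>x. x ^ Q) (a + monom c k) f"
      unfolding skew_add[OF Q0] g_def by (simp add: algebra_simps)
    thus ?thesis by blast
  qed
qed

lemma CHAR_dvd_card_my: "CHAR('a::{comm_ring_1,finite}) dvd card (UNIV :: 'a set)"
proof -
  define c where "c = CHAR('a)"
  have c0: "c > 0" unfolding c_def by (simp add: finite_imp_CHAR_pos)
  have oc: "(of_nat c :: 'a) = 0" unfolding c_def by simp
  define H where "H = range (of_nat :: nat \<Rightarrow> 'a)"
  have Hmod: "(of_nat n :: 'a) = of_nat (n mod c)" for n
  proof -
    have "(of_nat n :: 'a) = of_nat (n mod c + c * (n div c))" by simp
    also have "\<dots> = of_nat (n mod c)" by (simp only: of_nat_add of_nat_mult oc) simp
    finally show ?thesis .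
  qed
  have "H = of_nat ` {..<c}"
  proof
    show "H \<subseteq> of_nat ` {..<c}"
    proof
      fix x assume "x \<in> H"
      then obtain n where "x = of_nat n" unfolding H_def by auto
      hence "x = of_nat (n mod c)" using Hmod by simp
      moreover have "n mod c \<in> {..<c}" using c0 by simp
      ultimately show "x \<in> of_nat ` {..<c}" by blast
    qed
  qed (auto simp: H_def)
  moreover have "inj_on (of_nat :: nat \<Rightarrow> 'a) {..<c}"
  proof (rule inj_onI, rule ccontr)
    fix a b assume ab: "a \<in> {..<c}" "b \<in> {..<c}" "(of_nat a :: 'a) = of_nat b" "a \<noteq> b"
    { fix a b assume ab: "a < c" "b < c" "(of_nat a :: 'a) = of_nat b" "a < b"
      hence "(of_nat (b - a) :: 'a) = 0" by (simp add: of_nat_diff)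
      hence "c dvd b - a" unfolding c_def using of_nat_eq_0_iff_char_dvd by blast
      moreover have "0 < b - a" "b - a < c" using ab by auto
      ultimately have False using nat_dvd_not_less by blast } note * = this
    show False
    proof (cases "a < b")
      case True
      have "a < c" "b < c" using ab(1,2) by auto
      thus False using *[OF \<open>a < c\<close> \<open>b < c\<close> ab(3) True] by simp
    next
      case False hence "b < a" using ab(4) by simp
      have "a < c" "b < c" using ab(1,2) by auto
      thus False using *[OF \<open>b < c\<close> \<open>a < c\<close> ab(3)[symmetric] \<open>b < a\<close>] by simp
    qed
  qed
  ultimately have cardH: "card H = c" by (simp add: card_image)
  have Hadd: "x + y \<in> H" if "x \<in> H" "y \<in> H" for x y
    using that unfolding H_def by (auto simp flip: of_nat_add)
  have Hneg: "- x \<in> H" if xH: "x \<in> H" for x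
  proof -
    obtain n where n: "x = of_nat n" using xH H_def by auto
    have "of_nat ((c - 1) * n) + x = (of_nat (c * n) :: 'a)"
      using c0 n by (simp add: algebra_simps of_nat_diff)
    also have "\<dots> = 0" by (simp add: oc)
    finally have "- x = of_nat ((c - 1) * n)" by (metis add.commute minus_unique)
    thus ?thesis unfolding H_def by (metis rangeI)
  qed
  define C where "C = (\<lambda>x. (+) x ` H) ` UNIV"
  have "c * card C = card (\<Union>C)"
  proof (rule card_partition)
    show "finite C" unfolding C_def by simp
    show "finite (\<Union>C)" by simp
    show "\<And>X. X \<in> C \<Longrightarrow> card X = c"
      unfolding C_def using cardH by (auto intro!: card_image inj_onI)
    show "\<And>X1 X2. X1 \<in> C \<Longrightarrow> X2 \<in> C \<Longrightarrow> X1 \<noteq> X2 \<Longrightarrow> X1 \<inter> X2 = {}"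
    proof (rule ccontr)
      fix X1 X2 assume X: "X1 \<in> C" "X2 \<in> C" "X1 \<noteq> X2" "X1 \<inter> X2 \<noteq> {}"
      then obtain x y where xy: "X1 = (+) x ` H" "X2 = (+) y ` H" unfolding C_def by auto
      then obtain h1 h2 where h: "h1 \<in> H" "h2 \<in> H" "x + h1 = y + h2" using X by auto
      define d where "d = h2 - h1"
      have d1: "d \<in> H" unfolding d_def diff_conv_add_uminus using Hadd[OF h(2) Hneg[OF h(1)]] .
      have d: "d \<in> H" "-d \<in> H" using d1 Hneg[OF d1] by auto
      have x: "x = y + d" using h unfolding d_def by (simp add: algebra_simps)
      have "X1 = X2"
      proof
        show "X1 \<subseteq> X2" unfolding xy x
        proof
          fix z assume "z \<in> (+) (y + d) ` H"
          then obtain h where "h \<in> H" "z = y + (d + h)" by (auto simp: add.assoc)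
          moreover have "d + h \<in> H" using Hadd[OF d(1) \<open>h \<in> H\<close>] .
          ultimately show "z \<in> (+) y ` H" using image_eqI[of z "(+) y" "d + h" H] by simp
        qed
        show "X2 \<subseteq> X1" unfolding xy x
        proof
          fix z assume "z \<in> (+) y ` H"
          then obtain h where "h \<in> H" "z = y + h" by auto
          hence "z = y + d + (-d + h)" by simp
          moreover have "-d + h \<in> H" using Hadd[OF d(2) \<open>h \<in> H\<close>] .
          ultimately show "z \<in> (+) (y + d) ` H" using image_eqI[of z "(+) (y + d)" "-d + h" H] by (simp add: add.assoc)
        qed
      qed
      thus False using X by simp
    qed
  qed
  moreover have "\<Union>C = UNIV"
  proof -
    have "\<And>x. x \<in> (+) x ` H"
    proof -
      fix x :: 'a have "(0::'a) \<in> H" unfolding H_def by (metis of_nat_0 rangeI)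
      thus "x \<in> (+) x ` H" using image_eqI[of x "(+) x" 0 H] by simp
    qed
    thus ?thesis unfolding C_def by blast
  qed
  ultimately have "card (UNIV :: 'a set) = c * card C" by simp
  thus ?thesis unfolding c_def by (simp add: dvdI)
qed

lemma CHAR_eq_p:
  assumes "prime p" and "card (UNIV :: 'a::{field,finite} set) = p ^ r"
  shows "CHAR('a) = p"
proof -
  have pc: "prime CHAR('a)"
    by (rule prime_CHAR_semidom) (simp add: finite_imp_CHAR_pos)
  have "CHAR('a) dvd p ^ r" using CHAR_dvd_card_my[where 'a='a] assms by simp
  hence "CHAR('a) dvd p" using pc prime_dvd_power by blast
  thus ?thesis using pc assms(1) primes_dvd_imp_eq by blast
qed

lemma weight_le: "deg_less w N \<Longrightarrow> weight w \<le> N"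
proof -
  assume "deg_less w N"
  hence "{i. coeff w i \<noteq> 0} \<subseteq> {..<N}" unfolding deg_less_def by (auto simp: not_less[symmetric])
  hence "card {i. coeff w i \<noteq> 0} \<le> card {..<N}" by (intro card_mono) auto
  thus ?thesis unfolding weight_def by simp
qed

theorem mainTheorem9:
  fixes p r s n :: nat and f F :: "'a::{field,finite} poly"
  assumes "prime p" and "card (UNIV :: 'a set) = p ^ r" and "1 \<le> s" and "s \<le> r - 1"
    and "degree F = n" and "lead_coeff F = 1"
    and "\<exists>h. F = skew_mult (\<lambda>a. a ^ (p ^ s)) h f"
    and "skew_code (\<lambda>a. a ^ (p ^ s)) f n \<noteq> {0}"
  shows "min_dist (lin_code (p ^ s) f n) \<le> min_dist (skew_code (\<lambda>a. a ^ (p ^ s)) f n)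
    \<and> (min_dist (lin_code (p ^ s) f n) = min_dist (skew_code (\<lambda>a. a ^ (p ^ s)) f n)
       \<longleftrightarrow> (\<exists>v\<in>lin_code (p ^ s) f n. v \<noteq> 0 \<and> weight v = min_dist (lin_code (p ^ s) f n)
              \<and> v \<in> lin_polys (p ^ s)))"
proof -
  have ch: "CHAR('a) = p" using CHAR_eq_p assms(1,2) by blast
  have pc: "prime CHAR('a)" using ch assms(1) by simp
  have p2: "p \<ge> 2" using assms(1) prime_ge_2_nat by blast
  have Q: "p ^ s \<ge> 2"
  proof -
    have "p ^ 1 \<le> p ^ s" using assms(3) p2 by (intro power_increasing) auto
    thus ?thesis using p2 by simp
  qed
  have Qp: "p ^ s = CHAR('a) ^ s" using ch by simp
  let ?S = "skew_code (\<lambda>a. a ^ (p ^ s)) f n"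
  let ?C = "lin_code (p ^ s) f n"
  let ?L = "lin_poly (p ^ s)"
  have SC: "?L w \<in> ?C" if "w \<in> ?S" for w
  proof -
    from that obtain a where w: "deg_less w n" "w = skew_mult (\<lambda>a. a ^ (p ^ s)) a f"
      unfolding skew_code_def by blast
    have "?L f dvd ?L w" unfolding w(2) by (rule lin_skew_dvd[OF Q pc Qp])
    then obtain b where "?L w = ?L f * b" by (rule dvdE)
    moreover have "deg_less (?L w) (qbr (p ^ s) n)" using w(1) by (simp add: deg_less_lin[OF Q])
    ultimately show ?thesis unfolding lin_code_def by (auto simp: mult.commute)
  qed
  have CS: "w \<in> ?S" if dl: "deg_less w n" and Lw: "?L w \<in> ?C" for w
  proof -
    from Lw obtain b where "?L w = b * ?L f" unfolding lin_code_def by blast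
    hence "?L f dvd ?L w" by simp
    then obtain a where "w = skew_mult (\<lambda>x. x ^ (p ^ s)) a f"
      using skew_div[OF Q pc Qp dl] by blast
    thus ?thesis using dl unfolding skew_code_def by blast
  qed
  have finS: "finite (weight ` (?S - {0}))"
  proof (rule finite_subset)
    show "weight ` (?S - {0}) \<subseteq> {..n}" unfolding skew_code_def using weight_le by auto
  qed simp
  have finC: "finite (weight ` (?C - {0}))"
  proof (rule finite_subset)
    show "weight ` (?C - {0}) \<subseteq> {..qbr (p ^ s) n}" unfolding lin_code_def using weight_le by auto
  qed simp
  have neS: "?S - {0} \<noteq> {}"
  proof -
    have "0 \<in> ?S" unfolding skew_code_def deg_less_def
      by (auto intro!: exI[of _ 0] simp: skew_zero)
    thus ?thesis using assms(8) by blast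
  qed
  have "min_dist ?S \<in> weight ` (?S - {0})"
    unfolding min_dist_def using finS neS by (intro Min_in) auto
  then obtain w0 where w0': "w0 \<in> ?S - {0}" "min_dist ?S = weight w0" by (rule imageE)
  hence w0: "w0 \<in> ?S" "w0 \<noteq> 0" "weight w0 = min_dist ?S" by simp_all
  have v0: "?L w0 \<in> ?C" "?L w0 \<noteq> 0" "weight (?L w0) = min_dist ?S" "?L w0 \<in> lin_polys (p ^ s)"
    using SC[OF w0(1)] w0 lin_in by (auto simp: lin_eq0[OF Q] weight_lin[OF Q])
  have le: "min_dist ?C \<le> min_dist ?S"
  proof -
    have "weight (?L w0) \<in> weight ` (?C - {0})" using v0(1,2) by blast
    hence "min_dist ?C \<le> weight (?L w0)"
      unfolding min_dist_def using finC by (intro Min_le)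
    thus ?thesis using v0 by simp
  qed
  have iff: "(min_dist ?C = min_dist ?S) \<longleftrightarrow>
      (\<exists>v\<in>?C. v \<noteq> 0 \<and> weight v = min_dist ?C \<and> v \<in> lin_polys (p ^ s))"
  proof
    assume "min_dist ?C = min_dist ?S"
    thus "\<exists>v\<in>?C. v \<noteq> 0 \<and> weight v = min_dist ?C \<and> v \<in> lin_polys (p ^ s)"
      using v0 by auto
  next
    assume "\<exists>v\<in>?C. v \<noteq> 0 \<and> weight v = min_dist ?C \<and> v \<in> lin_polys (p ^ s)"
    then obtain v where v: "v \<in> ?C" "v \<noteq> 0" "weight v = min_dist ?C" "v \<in> lin_polys (p ^ s)"
      by blast
    obtain w where vw: "v = ?L w" using lin_surj[OF Q v(4)] by blast
    have "deg_less w n" using v(1) vw unfolding lin_code_def by (auto simp: deg_less_lin[OF Q])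
    hence wS: "w \<in> ?S" using CS v(1) vw by simp
    have "w \<noteq> 0" using v(2) vw by (auto simp: lin_zero[OF Q])
    hence "weight w \<in> weight ` (?S - {0})" using wS by blast
    hence "min_dist ?S \<le> weight w"
      unfolding min_dist_def using finS by (intro Min_le)
    also have "weight w = min_dist ?C" using v(3) vw by (simp add: weight_lin[OF Q])
    finally show "min_dist ?C = min_dist ?S" using le by simp
  qed
  show ?thesis using le iff by blast
qed

end
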